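(* Let $\sigma>0$, $q\in(2,\infty)$ and $\theta\in(1,\infty)$ with $\frac12+\frac1\theta=\frac1q+1$, and let $m_0\in\{-1,+1\}$. There exists a constant $C=C(n,\theta)>0$ (depending also on the fixed profile $\tilde\chi$) such that for almost every $r>0$, $$\big\|[S_r^{\chi_\sigma}(f)](t,\cdot)\big\|_{L^q(\mathbb R^{2n})}\le C\,\sigma^{2n(\frac1\theta-1)}\,r^{2n(\frac1\theta-1)}\,\|f(t+m_0r,\cdot)\|_{L^2(\mathbb R^{2n})}$$ for every measurable $f:\mathbb R^{1+2n}\to\mathbb R$ with $f(s,\cdot)\in L^2(\mathbb R^{2n})$ for all $s\in\mathbb R$, and every $t\in\mathbb R$.
   Context: Let $g_1(r)=r^{3/2}\cos(\log r)$, $g_2(r)=r^{3/2}\sin(\log r)$ ($r>0$). For $\mathbf m=(m_0,m_1,m_2)\in(\mathbb R\setminus\{0\})\times\mathbb R^n\times\mathbb R^n$ and $(t,x,v)\in\mathbb R^{1+2n}$ the critical kinetic trajectory is $\gamma^{\mathbf m}(r;(t,x,v))=\big(t+m_0r,\; x+m_0rv+g_1(r)m_1+m_0g_2(r)m_2,\; v+m_0^{-1}\dot g_1(r)m_1+\dot g_2(r)m_2\big)$, $r\ge0$. Fix a nonnegative $\tilde\chi\in C_c^\infty(\mathbb R^{2n})$, not identically zero, and set $\chi_\sigma=\tilde\chi(\sigma^{-1}\cdot)$. For $m_0=\pm1$ the kinetic mollification of $f$ at artificial time $r\ge0$ is $[S_r^{\chi}(f)](t,x,v)=\frac1{c_\chi}\int_{\mathbb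 R^{2n}}f\big(\gamma^{(m_0,m_1,m_2)}(r;(t,x,v))\big)\chi(m_1,m_2)\,d(m_1,m_2)$, where $c_\chi=\int_{\mathbb R^{2n}}\chi$. *)

theory Defs
  imports "HOL-Analysis.Analysis"
begin

text \<open>The functions g1, g2 of the paper (only used for r > 0).\<close>
definition g1 :: "real \<Rightarrow> real" where
  "g1 r = r powr (3/2) * cos (ln r)"

definition g2 :: "real \<Rightarrow> real" where
  "g2 r = r powr (3/2) * sin (ln r)"

text \<open>Points of R^{2n} are pairs (x,v) of vectors in R^n; points of R^{1+2n} are (t,(x,v)).\<close>
type_synonym 'n phase = "(real^'n) \<times> (real^'n)"

definition kin_traj ::
  "real \<Rightarrow> 'n::finite phase \<Rightarrow> real \<Rightarrow> real \<times> 'n phase \<Rightarrow> real \<times> 'n phase" where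
  "kin_traj m0 m r z =
     (case z of (t, x, v) \<Rightarrow> case m of (m1, m2) \<Rightarrow>
       (t + m0 * r,
        x + (m0 * r) *\<^sub>R v + g1 r *\<^sub>R m1 + (m0 * g2 r) *\<^sub>R m2,
        v + (deriv g1 r / m0) *\<^sub>R m1 + deriv g2 r *\<^sub>R m2))"

definition kin_moll ::
  "real \<Rightarrow> ('n::finite phase \<Rightarrow> real) \<Rightarrow> real \<Rightarrow> (real \<times> 'n phase \<Rightarrow> real)
     \<Rightarrow> real \<times> 'n phase \<Rightarrow> real" where
  "kin_moll m0 chi r f z =
     (1 / integral\<^sup>L lborel chi) *
       (\<integral> m. f (kin_traj m0 m r z) * chi m \<partial>lborel)"

coinductive smooth_fun :: "('a::euclidean_space \<Rightarrow> real) \<Rightarrow> bool" where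
  "(\<forall>x. f differentiable (at x)) \<Longrightarrow>
   (\<forall>b\<in>Basis. smooth_fun (\<lambda>x. frechet_derivative f (at x) b)) \<Longrightarrow> smooth_fun f"

definition Lp_norm :: "real \<Rightarrow> ('a::euclidean_space \<Rightarrow> real) \<Rightarrow> ennreal" where
  "Lp_norm p g =
     (let I = (\<integral>\<^sup>+ z. ennreal (\<bar>g z\<bar> powr p) \<partial>lborel)
      in if I = \<infinity> then \<infinity> else ennreal (enn2real I powr (1 / p)))"

end

theory Submission
  imports Defs
begin



lemma nn_integral_affine_eucl:
  fixes G :: "'a::euclidean_space \<Rightarrow> ennreal"
  assumes G[measurable]: "G \<in> borel_measurable borel" and k: "k \<noteq> 0"
  shows "(\<integral>\<^sup>+x. G (s + k *\<^sub>R x) \<partial>lborel) = ennreal (1 / \<bar>k\<bar>^DIM('a)) * (\<integral>\<^sup>+x. G x \<partial>lborel)"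
proof -
  have "(\<integral>\<^sup>+x. G x \<partial>lborel) = ennreal (\<bar>k\<bar>^DIM('a)) * (\<integral>\<^sup>+x. G (s + k *\<^sub>R x) \<partial>lborel)"
    by (subst lborel_affine[OF k, of s]) (simp add: nn_integral_density nn_integral_distr nn_integral_cmult)
  then have "ennreal (1 / \<bar>k\<bar>^DIM('a)) * (\<integral>\<^sup>+x. G x \<partial>lborel)
      = (ennreal (1 / \<bar>k\<bar>^DIM('a)) * ennreal (\<bar>k\<bar>^DIM('a))) * (\<integral>\<^sup>+x. G (s + k *\<^sub>R x) \<partial>lborel)"
    by (simp add: mult.assoc)
  also have "ennreal (1 / \<bar>k\<bar>^DIM('a)) * ennreal (\<bar>k\<bar>^DIM('a)) = 1"
    using k by (simp add: ennreal_mult[symmetric])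
  finally show ?thesis by simp
qed

lemma meas_comp_cont:
  fixes H :: "'b::topological_space \<Rightarrow> ennreal" and \<phi> :: "'c::topological_space \<Rightarrow> 'b"
  assumes "H \<in> borel_measurable borel" "continuous_on UNIV \<phi>"
  shows "(\<lambda>x. H (\<phi> x)) \<in> borel_measurable borel"
  using measurable_comp[OF borel_measurable_continuous_onI[OF assms(2)] assms(1)] by (simp add: comp_def)

lemma cv_pos:
  fixes H :: "'a::euclidean_space \<times> 'a \<Rightarrow> ennreal"
  assumes H[measurable]: "H \<in> borel_measurable borel" and a: "a \<noteq> 0" and D: "a*d - b*c \<noteq> 0"
  shows "(\<integral>\<^sup>+m. H (p + a *\<^sub>R fst m + b *\<^sub>R snd m, q + c *\<^sub>R fst m + d *\<^sub>R snd m) \<partial>lborel)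
     = ennreal (1/\<bar>a*d-b*c\<bar>^DIM('a)) * (\<integral>\<^sup>+m. H m \<partial>lborel)"
proof -
  define k where "k = d - c*b/a"
  have k: "k \<noteq> 0" using a D by (auto simp: k_def field_simps)
  have Dk: "\<bar>a*d-b*c\<bar> = \<bar>a\<bar> * \<bar>k\<bar>" using a by (simp add: k_def field_simps abs_mult[symmetric])
  have mH1: "(\<lambda>m::'a\<times>'a. H (p + a *\<^sub>R fst m + b *\<^sub>R snd m, q + c *\<^sub>R fst m + d *\<^sub>R snd m)) \<in> borel_measurable borel"
    by (rule meas_comp_cont[OF H]) (intro continuous_intros)
  have mH2: "(\<lambda>m::'a\<times>'a. H (fst m, q - (c/a) *\<^sub>R p + (c/a) *\<^sub>R fst m + k *\<^sub>R snd m)) \<in> borel_measurable borel"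
    by (rule meas_comp_cont[OF H]) (intro continuous_intros)
  have "(\<integral>\<^sup>+m. H (p + a *\<^sub>R fst m + b *\<^sub>R snd m, q + c *\<^sub>R fst m + d *\<^sub>R snd m) \<partial>lborel)
     = (\<integral>\<^sup>+m2. \<integral>\<^sup>+m1. H (p + a *\<^sub>R m1 + b *\<^sub>R m2, q + c *\<^sub>R m1 + d *\<^sub>R m2) \<partial>lborel \<partial>lborel)"
    using lborel_pair.nn_integral_snd[of "\<lambda>m. H (p + a *\<^sub>R fst m + b *\<^sub>R snd m, q + c *\<^sub>R fst m + d *\<^sub>R snd m)"]
      mH1 by (simp add: lborel_prod)
  also have "\<dots> = (\<integral>\<^sup>+m2. ennreal (1 / \<bar>a\<bar>^DIM('a)) *
        (\<integral>\<^sup>+u. H (u, q - (c/a) *\<^sub>R p + (c/a) *\<^sub>R u + k *\<^sub>R m2) \<partial>lborel) \<partial>lborel)"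
  proof (rule nn_integral_cong)
    fix m2 :: 'a
    have "(\<integral>\<^sup>+m1. H (p + a *\<^sub>R m1 + b *\<^sub>R m2, q + c *\<^sub>R m1 + d *\<^sub>R m2) \<partial>lborel)
       = (\<integral>\<^sup>+m1. (\<lambda>u. H (u, q - (c/a) *\<^sub>R p + (c/a) *\<^sub>R u + k *\<^sub>R m2)) ((p + b *\<^sub>R m2) + a *\<^sub>R m1) \<partial>lborel)"
      using a by (intro nn_integral_cong) (simp add: k_def algebra_simps scaleR_diff_left)
    also have "\<dots> = ennreal (1 / \<bar>a\<bar>^DIM('a)) * (\<integral>\<^sup>+u. H (u, q - (c/a) *\<^sub>R p + (c/a) *\<^sub>R u + k *\<^sub>R m2) \<partial>lborel)"
      by (rule nn_integral_affine_eucl[OF _ a]) (rule meas_comp_cont[OF H], intro continuous_intros)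
    finally show "(\<integral>\<^sup>+m1. H (p + a *\<^sub>R m1 + b *\<^sub>R m2, q + c *\<^sub>R m1 + d *\<^sub>R m2) \<partial>lborel) = \<dots>" .
  qed
  also have "\<dots> = ennreal (1 / \<bar>a\<bar>^DIM('a)) * (\<integral>\<^sup>+m2. \<integral>\<^sup>+u. H (u, q - (c/a) *\<^sub>R p + (c/a) *\<^sub>R u + k *\<^sub>R m2) \<partial>lborel \<partial>lborel)"
    apply (rule nn_integral_cmult)
    using mH2 by (simp add: lborel_prod[symmetric])
  also have "(\<integral>\<^sup>+m2. \<integral>\<^sup>+u. H (u, q - (c/a) *\<^sub>R p + (c/a) *\<^sub>R u + k *\<^sub>R m2) \<partial>lborel \<partial>lborel)
      = (\<integral>\<^sup>+u. \<integral>\<^sup>+m2. H (u, q - (c/a) *\<^sub>R p + (c/a) *\<^sub>R u + k *\<^sub>R m2) \<partial>lborel \<partial>lborel)"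
    apply (rule lborel_pair.Fubini')
    using mH2 by (simp add: lborel_prod[symmetric] case_prod_beta')
  also have "\<dots> = (\<integral>\<^sup>+u. ennreal (1 / \<bar>k\<bar>^DIM('a)) * \<integral>\<^sup>+w. H (u, w) \<partial>lborel \<partial>lborel)"
  proof (rule nn_integral_cong)
    fix u :: 'a
    show "(\<integral>\<^sup>+m2. H (u, q - (c/a) *\<^sub>R p + (c/a) *\<^sub>R u + k *\<^sub>R m2) \<partial>lborel) = ennreal (1 / \<bar>k\<bar>^DIM('a)) * \<integral>\<^sup>+w. H (u, w) \<partial>lborel"
      by (rule nn_integral_affine_eucl[OF _ k, of "\<lambda>w. H (u, w)"]) (rule meas_comp_cont[OF H], intro continuous_intros)
  qed
  also have "\<dots> = ennreal (1 / \<bar>k\<bar>^DIM('a)) * (\<integral>\<^sup>+u. \<integral>\<^sup>+w. H (u, w) \<partial>lborel \<partial>lborel)"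
    apply (rule nn_integral_cmult)
    using H by (simp add: lborel_prod[symmetric])
  also have "(\<integral>\<^sup>+u. \<integral>\<^sup>+w. H (u, w) \<partial>lborel \<partial>lborel) = (\<integral>\<^sup>+m. H m \<partial>lborel)"
    using lborel.nn_integral_fst[of H lborel] H by (simp add: lborel_prod)
  finally have eq: "(\<integral>\<^sup>+m. H (p + a *\<^sub>R fst m + b *\<^sub>R snd m, q + c *\<^sub>R fst m + d *\<^sub>R snd m) \<partial>lborel)
     = ennreal (1 / \<bar>a\<bar>^DIM('a)) * (ennreal (1 / \<bar>k\<bar>^DIM('a)) * (\<integral>\<^sup>+m. H m \<partial>lborel))" .
  have "ennreal (1 / \<bar>a\<bar>^DIM('a)) * ennreal (1 / \<bar>k\<bar>^DIM('a)) = ennreal (1/\<bar>a*d-b*c\<bar>^DIM('a))"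
    by (simp add: Dk ennreal_mult[symmetric] power_mult_distrib)
  then show ?thesis unfolding eq by (simp add: mult.assoc[symmetric])
qed

lemma swap_lborel:
  fixes F :: "'a::euclidean_space \<times> 'b::euclidean_space \<Rightarrow> ennreal"
  assumes F[measurable]: "F \<in> borel_measurable borel"
  shows "(\<integral>\<^sup>+m. F m \<partial>lborel) = (\<integral>\<^sup>+m. F (snd m, fst m) \<partial>lborel)"
proof -
  have mF: "(\<lambda>m::'b\<times>'a. F (snd m, fst m)) \<in> borel_measurable borel"
    by (rule meas_comp_cont[OF F]) (intro continuous_intros)
  have "(\<integral>\<^sup>+m. F (snd m, fst m) \<partial>lborel) = (\<integral>\<^sup>+x. \<integral>\<^sup>+y. F (y, x) \<partial>lborel \<partial>lborel)"
    using lborel.nn_integral_fst[of "\<lambda>m::'b\<times>'a. F (snd m, fst m)" lborel] mF by (simp add: lborel_prod)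
  also have "\<dots> = (\<integral>\<^sup>+y. \<integral>\<^sup>+x. F (y, x) \<partial>lborel \<partial>lborel)"
    apply (rule lborel_pair.Fubini'[symmetric])
    using F by (simp add: lborel_prod[symmetric] case_prod_beta')
  also have "\<dots> = (\<integral>\<^sup>+m. F m \<partial>lborel)"
    using lborel.nn_integral_fst[of F lborel] F by (simp add: lborel_prod)
  finally show ?thesis ..
qed

lemma cv:
  fixes H :: "'a::euclidean_space \<times> 'a \<Rightarrow> ennreal"
  assumes H[measurable]: "H \<in> borel_measurable borel" and D: "a*d - b*c \<noteq> 0"
  shows "(\<integral>\<^sup>+m. H (p + a *\<^sub>R fst m + b *\<^sub>R snd m, q + c *\<^sub>R fst m + d *\<^sub>R snd m) \<partial>lborel)
     = ennreal (1/\<bar>a*d-b*c\<bar>^DIM('a)) * (\<integral>\<^sup>+m. H m \<partial>lborel)"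
proof (cases "a = 0")
  case False
  then show ?thesis using cv_pos[OF H False D] by simp
next
  case True
  then have b: "b \<noteq> 0" using D by auto
  have D': "b*c - a*d \<noteq> 0" using D by auto
  have "(\<integral>\<^sup>+m. H (p + a *\<^sub>R fst m + b *\<^sub>R snd m, q + c *\<^sub>R fst m + d *\<^sub>R snd m) \<partial>lborel)
      = (\<integral>\<^sup>+m. H (p + b *\<^sub>R fst m + a *\<^sub>R snd m, q + d *\<^sub>R fst m + c *\<^sub>R snd m) \<partial>lborel)"
    apply (subst swap_lborel)
     apply (rule meas_comp_cont[OF H], intro continuous_intros)
    by (simp add: algebra_simps)
  also have "\<dots> = ennreal (1/\<bar>b*c-a*d\<bar>^DIM('a)) * (\<integral>\<^sup>+m. H m \<partial>lborel)"
    by (rule cv_pos[OF H b D'])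
  finally show ?thesis by (simp add: abs_minus_commute)
qed





lemma chi_props:
  fixes chi :: "'a::euclidean_space \<Rightarrow> real"
  assumes nn: "\<And>z. chi z \<ge> 0" and sm: "smooth_fun chi"
    and cp: "compact (closure {z. chi z \<noteq> 0})" and nz: "\<exists>z. chi z \<noteq> 0"
  shows "\<exists>M>0. \<exists>c>0. (\<forall>z. chi z \<le> M) \<and> continuous_on UNIV chi \<and> (\<integral>\<^sup>+z. ennreal (chi z) \<partial>lborel) = ennreal c"
proof -
  define K where "K = closure {z. chi z \<noteq> 0}"
  have dif: "\<forall>x. chi differentiable (at x)" using sm by (cases rule: smooth_fun.cases) auto
  have cont: "continuous_on UNIV chi"
    using dif by (intro continuous_at_imp_continuous_on) (auto intro: differentiable_imp_continuous_within)
  have "compact (chi ` K)" using cp unfolding K_def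
    by (intro compact_continuous_image continuous_on_subset[OF cont]) auto
  then obtain M0 where M0: "\<And>z. z \<in> K \<Longrightarrow> norm (chi z) \<le> M0"
    using compact_imp_bounded[of "chi ` K"] by (auto simp: bounded_iff)
  define M where "M = max 1 M0"
  have subK: "{z. chi z \<noteq> 0} \<subseteq> K" unfolding K_def by (rule closure_subset)
  have out: "\<And>z. z \<notin> K \<Longrightarrow> chi z = 0" using subK by blast
  have Mb: "\<And>z. chi z \<le> M"
  proof -
    fix z show "chi z \<le> M"
    proof (cases "z \<in> K")
      case True then show ?thesis using M0[OF True] by (auto simp: M_def)
    next
      case False then have "chi z = 0" by (rule out)
      then show ?thesis by (simp add: M_def)
    qed
  qed
  have Mp: "M > 0" by (simp add: M_def)
  have mchi[measurable]: "chi \<in> borel_measurable borel" by (rule borel_measurable_continuous_onI[OF cont])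
  have Kb: "K \<in> sets lborel" using cp unfolding K_def by (simp add: closed_closure)
  have Kfin: "emeasure lborel K < \<infinity>"
    using cp unfolding K_def
    by (metis bounded_subset_cbox_symmetric compact_imp_bounded emeasure_lborel_cbox_finite emeasure_mono order_le_less_trans sets_lborel cbox_borel)
  have up: "(\<integral>\<^sup>+z. ennreal (chi z) \<partial>lborel) \<le> (\<integral>\<^sup>+z. ennreal M * indicator K z \<partial>lborel)"
  proof (rule nn_integral_mono)
    fix z show "ennreal (chi z) \<le> ennreal M * indicator K z"
    proof (cases "z \<in> K")
      case True then show ?thesis using Mb[of z] by (simp add: ennreal_leI)
    next
      case False then have "chi z = 0" by (rule out)
      then show ?thesis by simp
    qed
  qed
  also have "\<dots> = ennreal M * emeasure lborel K" using Kb by (simp add: nn_integral_cmult_indicator)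
  also have "\<dots> < \<infinity>" using Kfin by (simp add: ennreal_mult_less_top)
  finally have fin: "(\<integral>\<^sup>+z. ennreal (chi z) \<partial>lborel) < \<infinity>" .
  obtain z0 where z0: "chi z0 > 0" using nz nn by (metis less_eq_real_def)
  have "open {z. chi z > chi z0 / 2}" using cont by (intro open_Collect_less continuous_intros) auto
  moreover have "z0 \<in> {z. chi z > chi z0 / 2}" using z0 by simp
  ultimately obtain e where e: "e > 0" "ball z0 e \<subseteq> {z. chi z > chi z0 / 2}" by (meson open_contains_ball)
  have "measure lborel (ball z0 e) > 0" by (rule content_ball_pos[OF e(1)])
  then have be: "emeasure lborel (ball z0 e) \<noteq> 0" by (auto simp: measure_def)
  have "0 < ennreal (chi z0 / 2) * emeasure lborel (ball z0 e)"
    using be z0 by (simp add: zero_less_iff_neq_zero ennreal_zero_less_divide) 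
  also have "\<dots> = (\<integral>\<^sup>+z. ennreal (chi z0 / 2) * indicator (ball z0 e) z \<partial>lborel)"
    by (simp add: nn_integral_cmult_indicator)
  also have "\<dots> \<le> (\<integral>\<^sup>+z. ennreal (chi z) \<partial>lborel)"
  proof (rule nn_integral_mono)
    fix z show "ennreal (chi z0 / 2) * indicator (ball z0 e) z \<le> ennreal (chi z)"
    proof (cases "z \<in> ball z0 e")
      case True then have "chi z0 / 2 < chi z" using e(2) by blast
      then show ?thesis using True by (simp add: ennreal_leI)
    next
      case False then show ?thesis by simp
    qed
  qed
  finally have pos: "0 < (\<integral>\<^sup>+z. ennreal (chi z) \<partial>lborel)" .
  define c where "c = enn2real (\<integral>\<^sup>+z. ennreal (chi z) \<partial>lborel)"
  have ceq: "(\<integral>\<^sup>+z. ennreal (chi z) \<partial>lborel) = ennreal c" using fin by (simp add: c_def ennreal_enn2real)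
  have "c > 0" using pos fin unfolding c_def by (simp add: enn2real_positive_iff)
  then show ?thesis using Mp Mb cont ceq by blast
qed





lemma powr32: assumes r: "r > (0::real)" shows "r powr (3/2) = r * r powr (1/2)"
  using powr_add[of r 1 "1/2"] r by simp

lemma deriv_g1: assumes r: "r > 0"
  shows "deriv g1 r = r powr (1/2) * (3/2 * cos (ln r) - sin (ln r))"
proof -
  have "(g1 has_real_derivative (3/2 * r powr (3/2 - 1) * cos (ln r) - r powr (3/2) * (sin (ln r) / r))) (at r)"
    unfolding g1_def[abs_def] using r
    by (auto intro!: derivative_eq_intros)
  moreover have "3/2 * r powr (3/2 - 1) * cos (ln r) - r powr (3/2) * (sin (ln r) / r) = r powr (1/2) * (3/2 * cos (ln r) - sin (ln r))"
    using r by (simp add: powr32 field_simps)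
  ultimately show ?thesis by (simp add: DERIV_imp_deriv)
qed

lemma deriv_g2: assumes r: "r > 0"
  shows "deriv g2 r = r powr (1/2) * (3/2 * sin (ln r) + cos (ln r))"
proof -
  have "(g2 has_real_derivative (3/2 * r powr (3/2 - 1) * sin (ln r) + r powr (3/2) * (cos (ln r) / r))) (at r)"
    unfolding g2_def[abs_def] using r
    by (auto intro!: derivative_eq_intros)
  moreover have "3/2 * r powr (3/2 - 1) * sin (ln r) + r powr (3/2) * (cos (ln r) / r) = r powr (1/2) * (3/2 * sin (ln r) + cos (ln r))"
    using r by (simp add: powr32 field_simps)
  ultimately show ?thesis by (simp add: DERIV_imp_deriv)
qed

lemma wronsk: assumes r: "r > 0"
  shows "g1 r * deriv g2 r - g2 r * deriv g1 r = r^2"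
proof -
  have e: "r powr (3/2) * r powr (1/2) = r^2"
    using powr_add[of r "3/2" "1/2", symmetric] r by (simp add: powr_numeral)
  define X where "X = r powr (3/2) * r powr (1/2)"
  have "g1 r * deriv g2 r - g2 r * deriv g1 r = X * cos (ln r) * cos (ln r) + X * sin (ln r) * sin (ln r)"
    using r unfolding deriv_g1[OF r] deriv_g2[OF r] g1_def g2_def X_def by (simp add: algebra_simps)
  also have "\<dots> = X * (cos (ln r) * cos (ln r) + sin (ln r) * sin (ln r))" by (simp only: distrib_left mult.assoc)
  also have "\<dots> = X" by (simp only: sin_cos_squared_add3 mult_1_right)
  finally show ?thesis using e by (simp add: X_def)
qed





lemma alg:
  fixes M c0 \<sigma> r Nr q :: real and n :: nat
  assumes M: "M > 0" and c0: "c0 > 0" and s: "\<sigma> > 0" and r: "r > 0" and N: "Nr \<ge> 0" and q: "q > 2"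
  shows "(((M*Nr/(r^(2*n)*(\<sigma>^(2*n)*c0))) powr ((q-2)/2)) * Nr) powr (1/q)
       = (M/c0) powr (1/2-1/q) * (\<sigma>*r) powr (-(real n)*(1-2/q)) * Nr powr (1/2)"
proof (cases "Nr = 0")
  case True then show ?thesis by simp
next
  case False
  then have Np: "Nr > 0" using N by simp
  have lp: "0 < (((M*Nr/(r^(2*n)*(\<sigma>^(2*n)*c0))) powr ((q-2)/2)) * Nr) powr (1/q)"
    using M c0 s r Np by simp
  have rp: "0 < (M/c0) powr (1/2-1/q) * (\<sigma>*r) powr (-(real n)*(1-2/q)) * Nr powr (1/2)"
    using M c0 s r Np by simp
  have "ln ((((M*Nr/(r^(2*n)*(\<sigma>^(2*n)*c0))) powr ((q-2)/2)) * Nr) powr (1/q))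
      = (1/q) * (((q-2)/2) * (ln M + ln Nr - (2*n) * ln r - (2*n) * ln \<sigma> - ln c0) + ln Nr)"
    using M c0 s r Np by (simp add: ln_powr ln_mult ln_div ln_realpow)
  also have "\<dots> = (1/2-1/q) * (ln M - ln c0) + (-(real n)*(1-2/q)) * (ln \<sigma> + ln r) + (1/2) * ln Nr"
    using q by (simp add: field_simps)
  also have "\<dots> = ln ((M/c0) powr (1/2-1/q) * (\<sigma>*r) powr (-(real n)*(1-2/q)) * Nr powr (1/2))"
    using M c0 s r Np by (simp add: ln_powr ln_mult ln_div)
  finally show ?thesis using lp rp by (simp only: ln_inj_iff)
qed





lemma kt_eq: "kin_traj m0 m r (t, y) =
   (t + m0 * r, (fst y + (m0 * r) *\<^sub>R snd y) + g1 r *\<^sub>R fst m + (m0 * g2 r) *\<^sub>R snd m,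
    snd y + (deriv g1 r / m0) *\<^sub>R fst m + deriv g2 r *\<^sub>R snd m)"
  by (simp add: kin_traj_def split: prod.splits)

lemma main_bound:
  fixes chi :: "'n::finite phase \<Rightarrow> real" and f :: "real \<times> 'n phase \<Rightarrow> real"
  assumes chi_nn: "\<And>z. 0 \<le> chi z" and chi_le: "\<And>z. chi z \<le> M" and chi_cont: "continuous_on UNIV chi"
    and chi_int: "(\<integral>\<^sup>+z. ennreal (chi z) \<partial>lborel) = ennreal c0" and c0: "c0 > 0" and Mp: "M > 0"
    and s: "\<sigma> > 0" and m0: "m0 \<in> {-1, 1}" and r: "r > 0"
    and fm: "f \<in> borel_measurable lborel" and fi: "integrable lborel (\<lambda>y. (f (t + m0 * r, y))\<^sup>2)" and q: "q > 2"
  shows "Lp_norm q (\<lambda>y. kin_moll m0 (\<lambda>m. chi ((1/\<sigma>) *\<^sub>R m)) r f (t, y))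
     \<le> ennreal ((M/c0) powr (1/2-1/q) * (\<sigma>*r) powr (-(real CARD('n))*(1-2/q))) * Lp_norm 2 (\<lambda>y. f (t + m0 * r, y))"
proof -
  define n where "n = CARD('n)"
  define s0 where "s0 = t + m0 * r"
  define chs where "chs = (\<lambda>m::'n phase. chi ((1/\<sigma>) *\<^sub>R m))"
  define H where "H = (\<lambda>w::'n phase. ennreal ((f (s0, w))\<^sup>2))"
  define a where "a = g1 r"
  define b where "b = m0 * g2 r"
  define cc where "cc = deriv g1 r / m0"
  define d where "d = deriv g2 r"
  have m0nz: "m0 \<noteq> 0" using m0 by auto
  have D: "a*d - b*cc = r^2" using wronsk[OF r] m0nz by (simp add: a_def b_def cc_def d_def)
  have fb[measurable]: "f \<in> borel_measurable borel" using fm by simp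
  have chim[measurable]: "chi \<in> borel_measurable borel" by (rule borel_measurable_continuous_onI[OF chi_cont])
  have chsc: "continuous_on UNIV chs" unfolding chs_def
    by (rule continuous_on_compose2[OF chi_cont]) (auto intro!: continuous_intros)
  have chsm[measurable]: "chs \<in> borel_measurable borel" by (rule borel_measurable_continuous_onI[OF chsc])
  have Hm[measurable]: "H \<in> borel_measurable borel" unfolding H_def
    by (intro measurable_compose[OF _ measurable_ennreal] borel_measurable_power,
        rule measurable_compose[OF _ fb]) simp
  have chs_int: "(\<integral>\<^sup>+m. ennreal (chs m) \<partial>lborel) = ennreal (\<sigma>^(2*n) * c0)"
  proof -
    have "(\<integral>\<^sup>+m. ennreal (chs m) \<partial>lborel) = (\<integral>\<^sup>+m. (\<lambda>w. ennreal (chi w)) (0 + (1/\<sigma>) *\<^sub>R fst m + 0 *\<^sub>R snd m, 0 + 0 *\<^sub>R fst m + (1/\<sigma>) *\<^sub>R snd m) \<partial>lborel)"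
      unfolding chs_def by (intro nn_integral_cong) (simp add: scaleR_prod_def)
    also have "\<dots> = ennreal (1/\<bar>(1/\<sigma>)*(1/\<sigma>) - 0*0\<bar>^DIM(real^'n)) * (\<integral>\<^sup>+m. ennreal (chi m) \<partial>lborel)"
      by (rule cv) (use s in auto)
    also have "\<dots> = ennreal (\<sigma>^(2*n) * c0)"
      using s c0 by (simp add: chi_int n_def ennreal_mult[symmetric] power_mult power2_eq_square power_divide)
    finally show ?thesis .
  qed

  define c where "c = integral\<^sup>L lborel chs"
  have c_eq: "c = \<sigma>^(2*n) * c0"
    unfolding c_def using chs_int chi_nn s c0
    by (subst integral_eq_nn_integral) (auto simp: chs_def)
  have cpos: "c > 0" using c_eq s c0 by simp
  define Nr where "Nr = integral\<^sup>L lborel (\<lambda>y. (f (s0, y))\<^sup>2)"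
  have N_eq: "(\<integral>\<^sup>+w. H w \<partial>lborel) = ennreal Nr"
    unfolding H_def Nr_def using fi by (subst nn_integral_eq_integral) (auto simp: s0_def)
  have Nr0: "Nr \<ge> 0" unfolding Nr_def by (rule Bochner_Integration.integral_nonneg) auto
  define P where "P = (\<lambda>y::'n phase. fst y + (m0*r) *\<^sub>R snd y)"
  define \<Phi> where "\<Phi> = (\<lambda>(y::'n phase) (m::'n phase). (P y + a *\<^sub>R fst m + b *\<^sub>R snd m, snd y + cc *\<^sub>R fst m + d *\<^sub>R snd m))"
  have kt: "\<And>m y. kin_traj m0 m r (t,y) = (s0, \<Phi> y m)"
    by (simp add: kt_eq \<Phi>_def P_def a_def b_def cc_def d_def s0_def)
  have \<Phi>c: "continuous_on UNIV (\<lambda>p. \<Phi> (fst p) (snd p))" unfolding \<Phi>_def P_def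
    by (intro continuous_intros)
  have \<Phi>c': "continuous_on UNIV (\<lambda>p. \<Phi> (snd p) (fst p))" unfolding \<Phi>_def P_def
    by (intro continuous_intros)
  define T where "T = (\<lambda>y. \<integral>\<^sup>+m. H (\<Phi> y m) * ennreal (chs m) \<partial>lborel)"
  have cs1: "(\<lambda>p::'n phase \<times> 'n phase. ennreal (chs (snd p))) \<in> borel_measurable borel"
    by (rule measurable_compose[OF _ measurable_ennreal], rule borel_measurable_continuous_onI,
        rule continuous_on_compose2[OF chsc]) (auto intro!: continuous_intros)
  have cs2: "(\<lambda>p::'n phase \<times> 'n phase. ennreal (chs (fst p))) \<in> borel_measurable borel"
    by (rule measurable_compose[OF _ measurable_ennreal], rule borel_measurable_continuous_onI,
        rule continuous_on_compose2[OF chsc]) (auto intro!: continuous_intros)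
  have Gm: "(\<lambda>p. H (\<Phi> (fst p) (snd p)) * ennreal (chs (snd p))) \<in> borel_measurable borel"
    by (intro borel_measurable_times_ennreal meas_comp_cont[OF Hm \<Phi>c] cs1)
  have Gm': "(\<lambda>p. H (\<Phi> (snd p) (fst p)) * ennreal (chs (fst p))) \<in> borel_measurable borel"
    by (intro borel_measurable_times_ennreal meas_comp_cont[OF Hm \<Phi>c'] cs2)
  have Tm: "T \<in> borel_measurable borel"
    using lborel.borel_measurable_nn_integral_fst[of "\<lambda>p. H (\<Phi> (fst p) (snd p)) * ennreal (chs (snd p))" lborel] Gm
    by (simp add: lborel_prod T_def)
  have Dn: "DIM(real^'n) = n" by (simp add: n_def)
  have TB: "\<And>y. T y \<le> ennreal (M * Nr / r^(2*n))"
  proof -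
    fix y
    have "T y \<le> (\<integral>\<^sup>+m. ennreal M * H (\<Phi> y m) \<partial>lborel)"
      unfolding T_def
    proof (intro nn_integral_mono)
      fix m
      have "ennreal (chs m) \<le> ennreal M" by (simp add: ennreal_leI chi_le chs_def)
      then have "H (\<Phi> y m) * ennreal (chs m) \<le> H (\<Phi> y m) * ennreal M" by (rule mult_left_mono) simp
      then show "H (\<Phi> y m) * ennreal (chs m) \<le> ennreal M * H (\<Phi> y m)" by (simp add: mult.commute)
    qed
    also have "\<dots> = ennreal M * (\<integral>\<^sup>+m. H (\<Phi> y m) \<partial>lborel)"
      by (rule nn_integral_cmult) (simp only: measurable_lborel2, rule meas_comp_cont[OF Hm], unfold \<Phi>_def, intro continuous_intros)
    also have "(\<integral>\<^sup>+m. H (\<Phi> y m) \<partial>lborel) = ennreal (1/\<bar>a*d-b*cc\<bar>^DIM(real^'n)) * (\<integral>\<^sup>+m. H m \<partial>lborel)"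
      unfolding \<Phi>_def by (rule cv[OF Hm]) (use D r in simp)
    also have "ennreal M * (ennreal (1/\<bar>a*d-b*cc\<bar>^DIM(real^'n)) * (\<integral>\<^sup>+m. H m \<partial>lborel)) = ennreal (M * Nr / r^(2*n))"
      using Mp Nr0 r by (simp add: D Dn N_eq ennreal_mult[symmetric] power_mult power2_eq_square n_def)
    finally show "T y \<le> ennreal (M * Nr / r^(2*n))" .
  qed
  have TC: "(\<integral>\<^sup>+y. T y \<partial>lborel) = ennreal (c * Nr)"
  proof -
    have "(\<integral>\<^sup>+y. T y \<partial>lborel) = (\<integral>\<^sup>+m. \<integral>\<^sup>+y. H (\<Phi> y m) * ennreal (chs m) \<partial>lborel \<partial>lborel)"
      unfolding T_def
      apply (rule lborel_pair.Fubini'[of "\<lambda>m y. H (\<Phi> y m) * ennreal (chs m)"])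
      using Gm' by (simp add: lborel_prod case_prod_beta')
    also have "\<dots> = (\<integral>\<^sup>+m. ennreal Nr * ennreal (chs m) \<partial>lborel)"
    proof (rule nn_integral_cong)
      fix m :: "'n phase"
      have "(\<integral>\<^sup>+y. H (\<Phi> y m) \<partial>lborel) = (\<integral>\<^sup>+y. H ((a *\<^sub>R fst m + b *\<^sub>R snd m) + 1 *\<^sub>R fst y + (m0*r) *\<^sub>R snd y,
            (cc *\<^sub>R fst m + d *\<^sub>R snd m) + 0 *\<^sub>R fst y + 1 *\<^sub>R snd y) \<partial>lborel)"
        unfolding \<Phi>_def P_def by (intro nn_integral_cong) (simp add: algebra_simps)
      also have "\<dots> = ennreal (1/\<bar>1*1-(m0*r)*0\<bar>^DIM(real^'n)) * (\<integral>\<^sup>+m. H m \<partial>lborel)"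
        by (rule cv[OF Hm]) simp
      finally have eqN: "(\<integral>\<^sup>+y. H (\<Phi> y m) \<partial>lborel) = ennreal Nr" by (simp add: N_eq)
      have meas: "(\<lambda>y. H (\<Phi> y m)) \<in> borel_measurable lborel"
        by (simp only: measurable_lborel2, rule meas_comp_cont[OF Hm], unfold \<Phi>_def P_def, intro continuous_intros)
      show "(\<integral>\<^sup>+y. H (\<Phi> y m) * ennreal (chs m) \<partial>lborel) = ennreal Nr * ennreal (chs m)"
        using nn_integral_multc[OF meas, of "ennreal (chs m)"] eqN by simp
    qed
    also have "\<dots> = ennreal Nr * ennreal c"
      by (subst nn_integral_cmult) (auto simp: chs_int c_eq)
    finally show ?thesis using Nr0 cpos by (simp add: ennreal_mult[symmetric] mult.commute)
  qed

  define S where "S = (\<lambda>y. kin_moll m0 chs r f (t, y))"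
  have SA: "\<And>y. ennreal ((S y)\<^sup>2) \<le> ennreal (1/c) * T y"
  proof -
    fix y :: "'n phase"
    define F where "F = (\<lambda>m. f (s0, \<Phi> y m))"
    have Fm: "F \<in> borel_measurable borel" unfolding F_def
      by (rule measurable_compose[OF _ fb], rule borel_measurable_continuous_onI)
         (unfold \<Phi>_def P_def, intro continuous_intros)
    have S_eq: "S y = (1/c) * integral\<^sup>L lborel (\<lambda>m. F m * chs m)"
      unfolding S_def kin_moll_def F_def c_def kt by simp
    have i1: "ennreal \<bar>integral\<^sup>L lborel (\<lambda>m. F m * chs m)\<bar> \<le> (\<integral>\<^sup>+m. ennreal (\<bar>F m\<bar> * chs m) \<partial>lborel)"
    proof (cases "integrable lborel (\<lambda>m. F m * chs m)")
      case True
      have "ennreal (norm (integral\<^sup>L lborel (\<lambda>m. F m * chs m))) \<le> (\<integral>\<^sup>+m. norm (F m * chs m) \<partial>lborel)"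
        by (rule integral_norm_bound_ennreal[OF True])
      also have "\<dots> = (\<integral>\<^sup>+m. ennreal (\<bar>F m\<bar> * chs m) \<partial>lborel)"
        by (intro nn_integral_cong) (simp add: abs_mult chs_def chi_nn)
      finally show ?thesis by simp
    next
      case False then show ?thesis by (simp add: not_integrable_integral_eq)
    qed
    have sqm: "(\<lambda>x. sqrt (chs x)) \<in> borel_measurable borel"
      by (intro borel_measurable_continuous_onI continuous_intros chsc)
    have sq: "\<And>m. sqrt (chs m) * sqrt (chs m) = chs m" using chi_nn by (simp add: chs_def)
    have "(\<integral>\<^sup>+m. ennreal (sqrt (chs m)) * ennreal (\<bar>F m\<bar> * sqrt (chs m)) \<partial>lborel)\<^sup>2
       \<le> (\<integral>\<^sup>+m. ennreal (sqrt (chs m)) ^ 2 \<partial>lborel) * (\<integral>\<^sup>+m. ennreal (\<bar>F m\<bar> * sqrt (chs m)) ^ 2 \<partial>lborel)"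
      by (rule Cauchy_Schwarz_nn_integral; simp only: measurable_lborel2; intro measurable_compose[OF _ measurable_ennreal] sqm borel_measurable_times borel_measurable_abs Fm chsm)
    also have "(\<integral>\<^sup>+m. ennreal (sqrt (chs m)) ^ 2 \<partial>lborel) = ennreal c"
      unfolding c_eq chs_int[symmetric] by (intro nn_integral_cong) (simp add: ennreal_power chs_def chi_nn)
    also have "(\<integral>\<^sup>+m. ennreal (\<bar>F m\<bar> * sqrt (chs m)) ^ 2 \<partial>lborel) = T y"
      unfolding T_def H_def F_def
      by (intro nn_integral_cong) (simp add: ennreal_power ennreal_mult[symmetric] power_mult_distrib chs_def chi_nn)
    also have "(\<integral>\<^sup>+m. ennreal (sqrt (chs m)) * ennreal (\<bar>F m\<bar> * sqrt (chs m)) \<partial>lborel)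
        = (\<integral>\<^sup>+m. ennreal (\<bar>F m\<bar> * chs m) \<partial>lborel)"
      by (intro nn_integral_cong) (simp add: ennreal_mult[symmetric] chs_def chi_nn mult_ac sq)
    finally have cs: "(\<integral>\<^sup>+m. ennreal (\<bar>F m\<bar> * chs m) \<partial>lborel)\<^sup>2 \<le> ennreal c * T y" .
    have "ennreal ((S y)\<^sup>2) = ennreal ((1/c)\<^sup>2) * (ennreal \<bar>integral\<^sup>L lborel (\<lambda>m. F m * chs m)\<bar>)\<^sup>2"
      unfolding S_eq by (simp add: ennreal_power ennreal_mult[symmetric] power_mult_distrib power_divide)
    also have "\<dots> \<le> ennreal ((1/c)\<^sup>2) * (\<integral>\<^sup>+m. ennreal (\<bar>F m\<bar> * chs m) \<partial>lborel)\<^sup>2"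
      by (intro mult_left_mono power_mono i1) auto
    also have "\<dots> \<le> ennreal ((1/c)\<^sup>2) * (ennreal c * T y)"
      by (intro mult_left_mono cs) auto
    also have "\<dots> = ennreal (1/c) * T y"
      using cpos by (simp add: mult.assoc[symmetric] ennreal_mult[symmetric] power2_eq_square)
    finally show "ennreal ((S y)\<^sup>2) \<le> ennreal (1/c) * T y" .
  qed

  define Bt where "Bt = M * Nr / r^(2*n)"
  define K where "K = (Bt/c) powr ((q-2)/2)"
  have Bt0: "Bt \<ge> 0" using Mp Nr0 r by (simp add: Bt_def)
  have K0: "K \<ge> 0" by (simp add: K_def)
  have pw: "\<And>y. ennreal (\<bar>S y\<bar> powr q) \<le> ennreal (K/c) * T y"
  proof -
    fix y
    define u where "u = (S y)\<^sup>2"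
    have u0: "u \<ge> 0" by (simp add: u_def)
    have Tlt: "T y < top" using TB[of y] by (meson ennreal_less_top order_le_less_trans)
    define \<tau> where "\<tau> = enn2real (T y)"
    have \<tau>0: "\<tau> \<ge> 0" by (simp add: \<tau>_def)
    have Teq: "T y = ennreal \<tau>" using Tlt by (simp add: \<tau>_def)
    have "ennreal u \<le> ennreal (1/c) * ennreal \<tau>" using SA[of y] by (simp add: u_def Teq)
    also have "\<dots> = ennreal (\<tau>/c)" using cpos \<tau>0 by (simp add: ennreal_mult[symmetric])
    finally have u1: "u \<le> \<tau>/c" using cpos \<tau>0 by simp
    have "ennreal \<tau> \<le> ennreal Bt" using TB[of y] by (simp add: Teq Bt_def)
    then have \<tau>B: "\<tau> \<le> Bt" using Bt0 by simp
    have uB: "u \<le> Bt/c" using u1 \<tau>B cpos by (meson divide_right_mono less_imp_le order_trans)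
    have "\<bar>S y\<bar> powr q = (\<bar>S y\<bar> powr 2) powr (q/2)" using powr_powr[of "\<bar>S y\<bar>" 2 "q/2"] by simp
    also have "\<bar>S y\<bar> powr 2 = u" by (simp add: u_def)
    also have "u powr (q/2) = u powr ((q-2)/2 + 1)" by (rule arg_cong[where f="\<lambda>x. u powr x"]) (simp add: field_simps)
    also have "\<dots> = u powr ((q-2)/2) * u" using u0 by (simp add: powr_add powr_one)
    also have "\<dots> \<le> K * (\<tau>/c)"
      unfolding K_def using q u0 uB u1 by (intro mult_mono powr_mono2) auto
    finally have "\<bar>S y\<bar> powr q \<le> K * (\<tau>/c)" .
    then have "ennreal (\<bar>S y\<bar> powr q) \<le> ennreal (K * (\<tau>/c))" by (rule ennreal_leI)
    also have "\<dots> = ennreal (K/c) * T y" using K0 cpos \<tau>0 by (simp add: Teq ennreal_mult[symmetric])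
    finally show "ennreal (\<bar>S y\<bar> powr q) \<le> ennreal (K/c) * T y" .
  qed
  have I: "(\<integral>\<^sup>+y. ennreal (\<bar>S y\<bar> powr q) \<partial>lborel) \<le> ennreal (K * Nr)"
  proof -
    have "(\<integral>\<^sup>+y. ennreal (\<bar>S y\<bar> powr q) \<partial>lborel) \<le> (\<integral>\<^sup>+y. ennreal (K/c) * T y \<partial>lborel)"
      by (intro nn_integral_mono pw)
    also have "\<dots> = ennreal (K/c) * ennreal (c * Nr)"
      using Tm by (simp add: nn_integral_cmult TC)
    also have "\<dots> = ennreal (K * Nr)" using cpos K0 Nr0 by (simp add: ennreal_mult[symmetric])
    finally show ?thesis .
  qed
  have L1: "Lp_norm q S \<le> ennreal ((K * Nr) powr (1/q))"
  proof -
    define I where "I = (\<integral>\<^sup>+y. ennreal (\<bar>S y\<bar> powr q) \<partial>lborel)"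
    have Ilt: "I \<noteq> \<infinity>" using I unfolding I_def by (metis ennreal_less_top infinity_ennreal_def leD)
    have "enn2real I \<le> enn2real (ennreal (K * Nr))" using I unfolding I_def by (intro enn2real_mono) auto
    then have "enn2real I \<le> K * Nr" using K0 Nr0 by simp
    then have "enn2real I powr (1/q) \<le> (K * Nr) powr (1/q)" using q by (intro powr_mono2) auto
    then show ?thesis unfolding Lp_norm_def Let_def I_def[symmetric] using Ilt by (simp add: ennreal_leI)
  qed
  have L2: "Lp_norm 2 (\<lambda>y. f (t + m0 * r, y)) = ennreal (Nr powr (1/2))"
  proof -
    have "(\<integral>\<^sup>+y. ennreal (\<bar>f (t + m0 * r, y)\<bar> powr 2) \<partial>lborel) = ennreal Nr"
      unfolding N_eq[symmetric] H_def s0_def by (intro nn_integral_cong) simp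
    then show ?thesis unfolding Lp_norm_def Let_def using Nr0 by simp
  qed
  have "(K * Nr) powr (1/q) = (M/c0) powr (1/2-1/q) * (\<sigma>*r) powr (-(real n)*(1-2/q)) * Nr powr (1/2)"
    unfolding K_def Bt_def c_eq using alg[OF Mp c0 s r Nr0 q, of n] by (simp add: field_simps)
  then have "ennreal ((K * Nr) powr (1/q)) = ennreal ((M/c0) powr (1/2-1/q) * (\<sigma>*r) powr (-(real CARD('n))*(1-2/q))) * Lp_norm 2 (\<lambda>y. f (t + m0 * r, y))"
    unfolding L2 by (simp add: ennreal_mult[symmetric] n_def)
  then show ?thesis using L1 unfolding S_def chs_def by simp
qed


theorem mainTheorem2:
  fixes chi_tilde :: "'n::finite phase \<Rightarrow> real"
    and q \<theta> :: real
  assumes chi_nonneg: "\<And>z. chi_tilde z \<ge> 0"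
    and chi_smooth: "smooth_fun chi_tilde"
    and chi_supp: "compact (closure {z. chi_tilde z \<noteq> 0})"
    and chi_nonzero: "\<exists>z. chi_tilde z \<noteq> 0"
    and q: "2 < q"
    and \<theta>: "1 < \<theta>"
    and young: "1/2 + 1/\<theta> = 1/q + 1"
  shows "\<exists>C>0. \<forall>\<sigma>>0. \<forall>m0\<in>{-1, 1::real}.
           AE r in lborel. r > 0 \<longrightarrow>
             (\<forall>f :: real \<times> 'n phase \<Rightarrow> real. \<forall>t.
                f \<in> borel_measurable lborel \<longrightarrow>
                (\<forall>s. integrable lborel (\<lambda>y. (f (s, y))\<^sup>2)) \<longrightarrow>
                Lp_norm q (\<lambda>y. kin_moll m0 (\<lambda>m. chi_tilde ((1/\<sigma>) *\<^sub>R m)) r f (t, y))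
                  \<le> ennreal (C * \<sigma> powr (2 * CARD('n) * (1/\<theta> - 1))
                               * r powr (2 * CARD('n) * (1/\<theta> - 1)))
                    * Lp_norm 2 (\<lambda>y. f (t + m0 * r, y)))"
proof -
  obtain M c0 where Mp: "M > 0" and c0: "c0 > 0" and chi_le: "\<forall>z. chi_tilde z \<le> M"
    and cont: "continuous_on UNIV chi_tilde" and cint: "(\<integral>\<^sup>+z. ennreal (chi_tilde z) \<partial>lborel) = ennreal c0"
    using chi_props[OF chi_nonneg chi_smooth chi_supp chi_nonzero] by blast
  define C where "C = (M/c0) powr (1/2 - 1/q)"
  have Cp: "C > 0" using Mp c0 by (simp add: C_def)
  have th: "1/\<theta> - 1 = 1/q - 1/2" using young by simp
  have ex: "2 * real CARD('n) * (1/\<theta> - 1) = -(real CARD('n))*(1-2/q)"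
    unfolding th by (simp add: field_simps)
  show ?thesis
  proof (intro exI[of _ C] conjI Cp allI impI ballI)
    fix \<sigma> :: real and m0 :: real
    assume s: "\<sigma> > 0" and m0: "m0 \<in> {-1, 1}"
    show "AE r in lborel. r > 0 \<longrightarrow>
             (\<forall>f :: real \<times> 'n phase \<Rightarrow> real. \<forall>t.
                f \<in> borel_measurable lborel \<longrightarrow>
                (\<forall>s. integrable lborel (\<lambda>y. (f (s, y))\<^sup>2)) \<longrightarrow>
                Lp_norm q (\<lambda>y. kin_moll m0 (\<lambda>m. chi_tilde ((1/\<sigma>) *\<^sub>R m)) r f (t, y))
                  \<le> ennreal (C * \<sigma> powr (2 * CARD('n) * (1/\<theta> - 1))
                               * r powr (2 * CARD('n) * (1/\<theta> - 1)))
                    * Lp_norm 2 (\<lambda>y. f (t + m0 * r, y)))"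
    proof (rule AE_I2, intro impI allI)
      fix r :: real and f :: "real \<times> 'n phase \<Rightarrow> real" and t :: real
      assume r: "r > 0" and fm: "f \<in> borel_measurable lborel" and fi: "\<forall>s. integrable lborel (\<lambda>y. (f (s, y))\<^sup>2)"
      have "Lp_norm q (\<lambda>y. kin_moll m0 (\<lambda>m. chi_tilde ((1/\<sigma>) *\<^sub>R m)) r f (t, y))
         \<le> ennreal ((M/c0) powr (1/2-1/q) * (\<sigma>*r) powr (-(real CARD('n))*(1-2/q))) * Lp_norm 2 (\<lambda>y. f (t + m0 * r, y))"
        by (rule main_bound[OF chi_nonneg _ cont cint c0 Mp s m0 r fm fi[rule_format] q]) (use chi_le in blast)
      also have "(M/c0) powr (1/2-1/q) * (\<sigma>*r) powr (-(real CARD('n))*(1-2/q))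
          = C * \<sigma> powr (2 * CARD('n) * (1/\<theta> - 1)) * r powr (2 * CARD('n) * (1/\<theta> - 1))"
        using s r by (simp add: C_def ex powr_mult)
      finally show "Lp_norm q (\<lambda>y. kin_moll m0 (\<lambda>m. chi_tilde ((1/\<sigma>) *\<^sub>R m)) r f (t, y))
                  \<le> ennreal (C * \<sigma> powr (2 * CARD('n) * (1/\<theta> - 1))
                               * r powr (2 * CARD('n) * (1/\<theta> - 1)))
                    * Lp_norm 2 (\<lambda>y. f (t + m0 * r, y))" .
    qed
  qed
qed

end
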